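(* Let $\mathcal{Q}=\mathcal{Q}_\ell(T,X,Y)$ and let $\alpha\in\mathcal{Q}$. Then the $H^{\mathcal{P}}$-canonical form of $\alpha$ (in $\mathcal{P}_\ell(T,X)$) is a product of elements of $H^{\mathcal{Q}}$. Moreover, $H^{\mathcal{P}}\cap\mathcal{Q}=H^{\mathcal{Q}}$ and $X\cap\mathcal{Q}=Y$.
   Context: Let $T$ be a monoid, $X$ a semilattice with identity $1_X$ (ordered by $e\le f$ iff $ef=e$) with an order-preserving left action of $T$. $\mathcal{P}_\ell(T,X)$: let $T*X$ be the semigroup free product acting on $X$ (elements of $X$ act by multiplication), $\omega^+=\omega\cdot1_X$, $\sim$ the semigroup congruence generated by $\{(\alpha^+\alpha,\alpha)\}\cup\{(1_T,1_X)\}$, and $\mathcal{P}_\ell(T,X)=(T*X)/\sim$ with $[\alpha]^+=[\alpha^+]$; $X$, $T$ are identified with their injective images. It is a left Ehresmann monoid with projections $X$, unique $T$-normal forms $t_0e_1t_1\cdots e_nt_n$ ($n\ge0$, $e_i\in X\setminus\{1\}$, $t_1,\dots,t_{n-1}\in T\setminus\{1\}$, $e_i<(t_ie_{i+1}\cdots e_nt_n)^+$), and unary operation $a^*=e_n$ if $n\ge1$, $t_n=1$, and $a^*=1$ otherwise. $H^{\mathcal{P}}=\{te:t\in T,e\in X\}$; every element of $\mathcal{P}_\ell(T,X)$ has a unique $H^{\mathcal{P}}$-canonical form, i.e. expression $h_1\cdots h_n$, $h_i\in H^{\mathcal{P}}$, with $h_i^*<h_{i+1}^+$ ($1\le i<n$)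 and $h_i\notin X$ ($2\le i\le n$). Let $Y$ be a subsemilattice of $X$ having an identity, satisfying (A): for all $t\in T$, $e,f\in Y$ with $e\le f$, $t\cdot f\in Y$ implies $t\cdot e\in Y$; (B): for all $t\in T$ there is $g\in Y$ with $t\cdot g\in Y$. $H^{\mathcal{Q}}=\{te:t\in T,e\in Y,t\cdot e\in Y\}$, and $\mathcal{Q}_\ell(T,X,Y)$ is the subsemigroup of $\mathcal{P}_\ell(T,X)$ generated by $H^{\mathcal{Q}}$. *)

theory Defs
  imports Main
begin

(* T is the type 't (a monoid, class monoid_mult);
   X is the type 'x, a meet-semilattice with identity top = 1_X; the product ef in X
   is e \<sqinter> f, so e \<le> f iff ef = e.
   act :: 't \<Rightarrow> 'x \<Rightarrow> 'x is the order-preserving left action of T on X. *)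

definition is_action :: "('t::monoid_mult \<Rightarrow> 'x::bounded_semilattice_inf_top \<Rightarrow> 'x) \<Rightarrow> bool" where
  "is_action act \<longleftrightarrow> (\<forall>e. act 1 e = e) \<and> (\<forall>s t e. act (s * t) e = act s (act t e))
     \<and> (\<forall>t e f. e \<le> f \<longrightarrow> act t e \<le> act t f)"

(* Words over the disjoint union T + X: elements of the free semigroup; the semigroup free
   product T*X is its quotient by the relations [s][t] = [st] (s,t in T) and [e][f] = [ef]
   (e,f in X).  These relations are included in the congruence below, so P_l(T,X) is the
   quotient of nonempty words by pcong. *)
type_synonym ('t,'x) word = "('t + 'x) list"

fun actw :: "('t \<Rightarrow> 'x::bounded_semilattice_inf_top \<Rightarrow> 'x) \<Rightarrow> ('t,'x) word \<Rightarrow> 'x \<Rightarrow> 'x" where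
  "actw act [] x = x"
| "actw act (Inl t # w) x = act t (actw act w x)"
| "actw act (Inr e # w) x = inf e (actw act w x)"

definition wplus :: "('t \<Rightarrow> 'x::bounded_semilattice_inf_top \<Rightarrow> 'x) \<Rightarrow> ('t,'x) word \<Rightarrow> 'x" where
  "wplus act w = actw act w top"

inductive pcong :: "('t::monoid_mult \<Rightarrow> 'x::bounded_semilattice_inf_top \<Rightarrow> 'x) \<Rightarrow> ('t,'x) word \<Rightarrow> ('t,'x) word \<Rightarrow> bool"
  for act where
  fpT: "pcong act [Inl s, Inl t] [Inl (s * t)]"
| fpX: "pcong act [Inr e, Inr f] [Inr (inf e f)]"
| plus: "w \<noteq> [] \<Longrightarrow> pcong act (Inr (wplus act w) # w) w"
| one: "pcong act [Inl 1] [Inr top]"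
| refl: "pcong act w w"
| sym: "pcong act u v \<Longrightarrow> pcong act v u"
| trans: "pcong act u v \<Longrightarrow> pcong act v w \<Longrightarrow> pcong act u w"
| left: "pcong act u v \<Longrightarrow> pcong act (x @ u) (x @ v)"
| right: "pcong act u v \<Longrightarrow> pcong act (u @ x) (v @ x)"

definition hP :: "'t \<times> 'x \<Rightarrow> ('t,'x) word" where
  "hP h = [Inl (fst h), Inr (snd h)]"

(* T-normal forms t_0 e_1 t_1 ... e_n t_n, represented as (t_0, [(e_1,t_1),...,(e_n,t_n)]) *)
definition nfword :: "'t \<Rightarrow> ('x \<times> 't) list \<Rightarrow> ('t,'x) word" where
  "nfword t0 xs = Inl t0 # concat (map (\<lambda>(e,t). [Inr e, Inl t]) xs)"

definition is_Tnf :: "('t::monoid_mult \<Rightarrow> 'x::bounded_semilattice_inf_top \<Rightarrow> 'x) \<Rightarrow> 't \<times> ('x \<times> 't) list \<Rightarrow> bool" where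
  "is_Tnf act nf \<longleftrightarrow> (let xs = snd nf in
     (\<forall>j < length xs. fst (xs ! j) \<noteq> top) \<and>
     (\<forall>j. j + 1 < length xs \<longrightarrow> snd (xs ! j) \<noteq> 1) \<and>
     (\<forall>j < length xs. fst (xs ! j) < wplus act (nfword (snd (xs ! j)) (drop (Suc j) xs))))"

definition pstar :: "('t::monoid_mult \<Rightarrow> 'x::bounded_semilattice_inf_top \<Rightarrow> 'x) \<Rightarrow> ('t,'x) word \<Rightarrow> 'x" where
  "pstar act w = (let nf = (SOME nf. is_Tnf act nf \<and> pcong act (nfword (fst nf) (snd nf)) w);
                      xs = snd nf in
     if xs \<noteq> [] \<and> snd (last xs) = 1 then fst (last xs) else top)"

definition is_HPcanon :: "('t::monoid_mult \<Rightarrow> 'x::bounded_semilattice_inf_top \<Rightarrow> 'x) \<Rightarrow> ('t,'x) word \<Rightarrow> ('t \<times> 'x) list \<Rightarrow> bool" where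
  "is_HPcanon act w hs \<longleftrightarrow> hs \<noteq> [] \<and> pcong act (concat (map hP hs)) w \<and>
     (\<forall>i. i + 1 < length hs \<longrightarrow> pstar act (hP (hs ! i)) < wplus act (hP (hs ! (i + 1)))) \<and>
     (\<forall>i. 1 \<le> i \<and> i < length hs \<longrightarrow> \<not> (\<exists>f. pcong act (hP (hs ! i)) [Inr f]))"

definition good_Y :: "('t::monoid_mult \<Rightarrow> 'x::bounded_semilattice_inf_top \<Rightarrow> 'x) \<Rightarrow> 'x set \<Rightarrow> bool" where
  "good_Y act Y \<longleftrightarrow> (\<forall>e\<in>Y. \<forall>f\<in>Y. inf e f \<in> Y) \<and> (\<exists>u\<in>Y. \<forall>y\<in>Y. inf u y = y) \<and>
     (\<forall>t. \<forall>e\<in>Y. \<forall>f\<in>Y. e \<le> f \<longrightarrow> act t f \<in> Y \<longrightarrow> act t e \<in> Y) \<and>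
     (\<forall>t. \<exists>g\<in>Y. act t g \<in> Y)"

definition inHQ :: "('t::monoid_mult \<Rightarrow> 'x::bounded_semilattice_inf_top \<Rightarrow> 'x) \<Rightarrow> 'x set \<Rightarrow> ('t,'x) word \<Rightarrow> bool" where
  "inHQ act Y w \<longleftrightarrow> (\<exists>t e. e \<in> Y \<and> act t e \<in> Y \<and> pcong act w (hP (t, e)))"

definition inQ :: "('t::monoid_mult \<Rightarrow> 'x::bounded_semilattice_inf_top \<Rightarrow> 'x) \<Rightarrow> 'x set \<Rightarrow> ('t,'x) word \<Rightarrow> bool" where
  "inQ act Y w \<longleftrightarrow> (\<exists>ps. ps \<noteq> [] \<and> (\<forall>(t,e)\<in>set ps. e \<in> Y \<and> act t e \<in> Y) \<and>
                         pcong act w (concat (map hP ps)))"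

end

theory Submission
  imports Defs
begin

locale actl =
  fixes act :: "'t::monoid_mult \<Rightarrow> 'x::bounded_semilattice_inf_top \<Rightarrow> 'x"
  assumes is_act: "is_action act"
begin

lemma act_one[simp]: "act 1 e = e" using is_act by (simp add: is_action_def)
lemma act_mult: "act (s * t) e = act s (act t e)" using is_act by (simp add: is_action_def)
lemma act_mono: "e \<le> f \<Longrightarrow> act t e \<le> act t f" using is_act by (simp add: is_action_def)

lemma actw_append: "actw act (u @ v) x = actw act u (actw act v x)"
proof (induction u arbitrary: x)
  case (Cons a u) then show ?case by (cases a) auto
qed simp

lemma actw_mono: "x \<le> y \<Longrightarrow> actw act w x \<le> actw act w y"
proof (induction w arbitrary: x y)
  case (Cons a w) then show ?case by (cases a) (auto intro: act_mono le_infI2)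
qed simp

definition Pn :: "'t \<times> ('x \<times> 't) list \<Rightarrow> 'x" where
  "Pn n = wplus act (nfword (fst n) (snd n))"

lemma nfword_Cons: "nfword t ((e,u)#xs) = Inl t # Inr e # nfword u xs"
  by (simp add: nfword_def)
lemma nfword_Nil: "nfword t [] = [Inl t]"
  by (simp add: nfword_def)

lemma Pn_Nil[simp]: "Pn (t, []) = act t top"
  by (simp add: Pn_def wplus_def nfword_Nil)
lemma Pn_Cons[simp]: "Pn (t, (e,u)#xs) = act t (inf e (Pn (u, xs)))"
  by (simp add: Pn_def wplus_def nfword_Cons)

fun goodl :: "('x \<times> 't) list \<Rightarrow> bool" where
  "goodl [] = True"
| "goodl ((e,u)#xs) = (e \<noteq> top \<and> (xs \<noteq> [] \<longrightarrow> u \<noteq> 1) \<and> e < Pn (u, xs) \<and> goodl xs)"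

fun La :: "'t + 'x \<Rightarrow> 't \<times> ('x \<times> 't) list \<Rightarrow> 't \<times> ('x \<times> 't) list" where
  "La (Inl s) (t0, xs) = (s * t0, xs)"
| "La (Inr e) (t0, xs) = (let p = Pn (t0, xs); e' = inf e p in
     if e' = p then (t0, xs)
     else if t0 = 1 \<and> xs \<noteq> [] then (1, (e', snd (hd xs)) # tl xs)
     else (1, (e', t0) # xs))"

definition Lw :: "('t,'x) word \<Rightarrow> 't \<times> ('x \<times> 't) list \<Rightarrow> 't \<times> ('x \<times> 't) list" where
  "Lw w n = foldr La w n"

lemma Lw_Nil[simp]: "Lw [] n = n" by (simp add: Lw_def)
lemma Lw_Cons[simp]: "Lw (a # w) n = La a (Lw w n)" by (simp add: Lw_def)
lemma Lw_append: "Lw (u @ v) n = Lw u (Lw v n)" by (simp add: Lw_def)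

lemma Pn_good_Cons: "goodl ((e,u)#xs) \<Longrightarrow> Pn (t, (e,u)#xs) = act t e"
  by (auto simp: inf.absorb1 less_imp_le)

lemma La_Inr_good:
  assumes g: "goodl xs"
  shows "goodl (snd (La (Inr e) (t0, xs))) \<and> Pn (La (Inr e) (t0, xs)) = inf e (Pn (t0, xs))"
proof -
  define p where "p = Pn (t0, xs)"
  show ?thesis
  proof (cases "inf e p = p")
    case True
    then show ?thesis using g by (simp add: p_def Let_def)
  next
    case ne: False
    have lt: "inf e p < p" using ne by (simp add: less_le)
    show ?thesis
    proof (cases "t0 = 1 \<and> xs \<noteq> []")
      case True
      then obtain e1 u1 r where xs: "xs = (e1,u1)#r" and t0: "t0 = 1"
        by (metis list.exhaust surj_pair)
      have pe: "p = e1" using g Pn_good_Cons[of e1 u1 r 1] by (simp add: p_def xs t0)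
      have l2: "inf e e1 < Pn (u1, r)" using g xs
        by (meson inf_le2 goodl.simps(2) le_less_trans)
      have "goodl ((inf e e1, u1) # r)" using g xs l2 by auto
      moreover have "Pn (1, (inf e e1, u1) # r) = inf e e1" using l2
        by (simp add: inf_absorb1 less_imp_le)
      moreover have pe': "Pn (1, (e1,u1)#r) = e1" using pe by (simp add: p_def xs t0)
      moreover have "La (Inr e) (t0, xs) = (1, (inf e e1, u1) # r)"
        using ne pe' by (simp add: xs t0 Let_def del: Pn_Cons)
      ultimately show ?thesis using pe' by (simp add: xs t0 del: Pn_Cons)
    next
      case False
      have "goodl ((inf e p, t0) # xs)" using g lt False by (auto simp: p_def)
      moreover have "Pn (1, (inf e p, t0) # xs) = inf e p" using lt
        by (simp add: inf_absorb1 less_imp_le p_def)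
      moreover have "La (Inr e) (t0, xs) = (1, (inf e p, t0) # xs)"
        using ne False by (auto simp: p_def Let_def simp del: Pn_Cons)
      ultimately show ?thesis by (simp add: p_def del: Pn_Cons)
    qed
  qed
qed

lemma La_good:
  assumes "goodl (snd n)"
  shows "goodl (snd (La a n)) \<and> Pn (La a n) = actw act [a] (Pn n)"
proof (cases n)
  case (Pair t0 xs)
  show ?thesis
  proof (cases a)
    case (Inl s) then show ?thesis using assms Pair
      by (cases xs) (auto simp: act_mult)
  next
    case (Inr e) then show ?thesis using assms Pair La_Inr_good by auto
  qed
qed

lemma Lw_good:
  assumes "goodl (snd n)"
  shows "goodl (snd (Lw w n)) \<and> Pn (Lw w n) = actw act w (Pn n)"
  using assms
proof (induction w)
  case Nil then show ?case by simp
next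
  case (Cons a w)
  then show ?case using La_good[of "Lw w n" a] by (cases a) auto
qed


lemma La_inf:
  assumes g: "goodl xs"
  shows "La (Inr e) (La (Inr f) (t0, xs)) = La (Inr (inf e f)) (t0, xs)"
proof -
  define p where "p = Pn (t0, xs)"
  show ?thesis
  proof (cases "inf f p = p")
    case True
    then have "inf (inf e f) p = inf e p"
      by (metis inf.assoc inf.commute)
    then show ?thesis using True by (simp add: p_def[symmetric] Let_def del: Pn_Cons)
  next
    case ne: False
    have ne2: "inf (inf e f) p \<noteq> p" using ne
      by (metis inf.absorb_iff2 inf.coboundedI2 inf_le2 inf_commute antisym)
    obtain t' xs' where m: "La (Inr f) (t0, xs) = (1, (inf f p, t') # xs')"
      and m2: "La (Inr (inf e f)) (t0, xs) = (1, (inf (inf e f) p, t') # xs')"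
    proof (cases "t0 = 1 \<and> xs \<noteq> []")
      case True then show ?thesis using ne ne2 p_def
        by (intro that[of "snd (hd xs)" "tl xs"]) (auto simp: Let_def simp del: Pn_Cons)
    next
      case False then show ?thesis using ne ne2 p_def
        by (intro that[of t0 xs]) (auto simp: Let_def simp del: Pn_Cons)
    qed
    have pm: "Pn (1, (inf f p, t') # xs') = inf f p"
      using La_Inr_good[OF g, of f t0] m by (simp add: p_def del: Pn_Cons)
    have eq: "inf e (inf f p) = inf (inf e f) p" by (simp add: inf.assoc)
    show ?thesis
    proof (cases "inf e (inf f p) = inf f p")
      case True
      then show ?thesis unfolding m m2 using pm eq by (simp add: Let_def del: Pn_Cons)
    next
      case False
      then show ?thesis unfolding m m2 using pm eq by (simp add: Let_def del: Pn_Cons)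
    qed
  qed
qed

lemma La_plus:
  assumes g: "goodl (snd n)"
  shows "La (Inr (wplus act w)) (Lw w n) = Lw w n"
proof -
  obtain t0 xs where m: "Lw w n = (t0, xs)" by (cases "Lw w n")
  have "Pn (Lw w n) = actw act w (Pn n)" using Lw_good[OF g] by simp
  also have "\<dots> \<le> wplus act w" unfolding wplus_def by (rule actw_mono) simp
  finally have "inf (wplus act w) (Pn (t0, xs)) = Pn (t0, xs)" using m
    by (simp add: inf.absorb2 del: Pn_Cons)
  then show ?thesis using m by (simp add: Let_def del: Pn_Cons)
qed

lemma pcong_Lw:
  assumes "pcong act u v"
  shows "goodl (snd n) \<Longrightarrow> Lw u n = Lw v n"
  using assms
proof (induction arbitrary: n rule: pcong.induct)
  case (fpT s t) then show ?case by (cases n) (simp add: mult.assoc)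
next
  case (fpX e f) then show ?case by (cases n) (simp add: La_inf del: La.simps)
next
  case (plus w) then show ?case using La_plus by simp
next
  case one then show ?case by (cases n) (simp add: Let_def del: Pn_Cons)
next
  case (left u v x) then show ?case by (simp add: Lw_append)
next
  case (right u v x) then show ?case using Lw_good by (simp add: Lw_append)
qed auto

definition NF :: "('t,'x) word \<Rightarrow> 't \<times> ('x \<times> 't) list" where
  "NF w = Lw w (1, [])"

lemma NF_good: "goodl (snd (NF w))"
  using Lw_good[of "(1,[])" w] by (simp add: NF_def)

lemma pcong_NF: "pcong act u v \<Longrightarrow> NF u = NF v"
  unfolding NF_def by (rule pcong_Lw) simp_all

lemma NF_nfword: "goodl xs \<Longrightarrow> NF (nfword t0 xs) = (t0, xs)"
proof (induction xs arbitrary: t0)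
  case Nil then show ?case by (simp add: NF_def nfword_Nil)
next
  case (Cons a xs)
  obtain e u where a: "a = (e,u)" by (cases a)
  have ih: "Lw (nfword u xs) (1,[]) = (u, xs)" using Cons a by (simp add: NF_def)
  have lt: "e < Pn (u, xs)" using Cons.prems a by simp
  then have "inf e (Pn (u, xs)) \<noteq> Pn (u, xs)"
    by (metis inf.absorb_iff2 less_le_not_le)
  moreover have "inf e (Pn (u, xs)) = e" using lt by (simp add: inf.absorb1 less_imp_le)
  ultimately show ?case using Cons.prems a ih
    by (auto simp: NF_def nfword_Cons Let_def simp del: Pn_Cons)
qed


lemma Tnf_goodl: "is_Tnf act (t0, xs) \<longleftrightarrow> goodl xs"
proof (induction xs arbitrary: t0)
  case Nil then show ?case by (simp add: is_Tnf_def)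
next
  case (Cons a xs)
  obtain e u where a: "a = (e,u)" by (cases a)
  have A: "(\<forall>j < length (a#xs). fst ((a#xs) ! j) \<noteq> top) \<longleftrightarrow>
           e \<noteq> top \<and> (\<forall>j < length xs. fst (xs ! j) \<noteq> top)"
    by (simp add: a All_less_Suc2)
  have B: "(\<forall>j. j + 1 < length (a#xs) \<longrightarrow> snd ((a#xs) ! j) \<noteq> 1) \<longleftrightarrow>
           (xs \<noteq> [] \<longrightarrow> u \<noteq> 1) \<and> (\<forall>j. j + 1 < length xs \<longrightarrow> snd (xs ! j) \<noteq> 1)"
  proof -
    have "(\<forall>j. j + 1 < length (a#xs) \<longrightarrow> snd ((a#xs) ! j) \<noteq> 1) \<longleftrightarrow>
          (\<forall>j < length xs. snd ((a#xs) ! j) \<noteq> 1)" by auto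
    also have "\<dots> \<longleftrightarrow> (xs \<noteq> [] \<longrightarrow> u \<noteq> 1) \<and> (\<forall>j. j + 1 < length xs \<longrightarrow> snd (xs ! j) \<noteq> 1)"
    proof (cases xs)
      case Nil then show ?thesis by simp
    next
      case (Cons b ys)
      have "(\<forall>j < length xs. snd ((a#xs) ! j) \<noteq> 1) \<longleftrightarrow>
            (\<forall>j < Suc (length ys). snd ((a#xs) ! j) \<noteq> 1)" using Cons by simp
      also have "\<dots> \<longleftrightarrow> u \<noteq> 1 \<and> (\<forall>j < length ys. snd (xs ! j) \<noteq> 1)"
        by (simp add: All_less_Suc2 a)
      finally show ?thesis using Cons by auto
    qed
    finally show ?thesis .
  qed
  have C: "(\<forall>j < length (a#xs). fst ((a#xs) ! j) < wplus act (nfword (snd ((a#xs) ! j)) (drop (Suc j) (a#xs)))) \<longleftrightarrow>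
     e < Pn (u, xs) \<and> (\<forall>j < length xs. fst (xs ! j) < wplus act (nfword (snd (xs ! j)) (drop (Suc j) xs)))"
    by (simp add: a All_less_Suc2 Pn_def)
  have "is_Tnf act (t0, a#xs) \<longleftrightarrow> e \<noteq> top \<and> (xs \<noteq> [] \<longrightarrow> u \<noteq> 1) \<and> e < Pn (u, xs) \<and> is_Tnf act (t0, xs)"
    unfolding is_Tnf_def Let_def snd_conv using A B C by blast
  then show ?case using Cons.IH a by simp
qed

lemma NF_unique: "is_Tnf act nf \<Longrightarrow> pcong act (nfword (fst nf) (snd nf)) w \<Longrightarrow> nf = NF w"
  using NF_nfword[of "snd nf" "fst nf"] pcong_NF Tnf_goodl[of "fst nf" "snd nf"] by auto

definition nf0 :: "'t \<Rightarrow> 'x \<Rightarrow> 't \<times> ('x \<times> 't) list" where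
  "nf0 t e = (t, if e = top then [] else [(e,1)])"

lemma NF_hP: "NF (hP (t, e)) = nf0 t e"
  by (simp add: NF_def hP_def nf0_def Let_def)

lemma nf0_Tnf: "is_Tnf act (nf0 t e)"
  by (simp add: nf0_def Tnf_goodl del: Pn_Cons) (simp add: top.not_eq_extremum)

lemma pcong_nf0: "pcong act (nfword (fst (nf0 t e)) (snd (nf0 t e))) (hP (t, e))"
proof (cases "e = top")
  case True
  have "pcong act [Inl t, Inl 1] [Inl (t*1)]" by (rule pcong.fpT)
  then have 1: "pcong act [Inl t] [Inl t, Inl 1]" by (simp add: pcong.sym)
  have "pcong act ([Inl t] @ [Inl 1]) ([Inl t] @ [Inr top])" by (intro pcong.left pcong.one)
  then have 2: "pcong act [Inl t, Inl 1] [Inl t, Inr top]" by simp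
  have "pcong act [Inl t] [Inl t, Inr top]" by (rule pcong.trans[OF 1 2])
  then show ?thesis using True by (simp add: nf0_def nfword_Nil hP_def)
next
  case False
  have "pcong act ([Inl t, Inr e] @ [Inl 1]) ([Inl t, Inr e] @ [Inr top])" by (intro pcong.left pcong.one)
  then have 1: "pcong act [Inl t, Inr e, Inl 1] [Inl t, Inr e, Inr top]" by simp
  have "pcong act ([Inl t] @ [Inr e, Inr top]) ([Inl t] @ [Inr (inf e top)])" by (intro pcong.left pcong.fpX)
  then have 2: "pcong act [Inl t, Inr e, Inr top] [Inl t, Inr e]" by simp
  have "pcong act [Inl t, Inr e, Inl 1] [Inl t, Inr e]" by (rule pcong.trans[OF 1 2])
  then show ?thesis using False by (simp add: nf0_def nfword_def hP_def)
qed

lemma pstar_hP: "pstar act (hP (t, e)) = e"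
proof -
  let ?P = "\<lambda>nf. is_Tnf act nf \<and> pcong act (nfword (fst nf) (snd nf)) (hP (t, e))"
  have "?P (nf0 t e)" using nf0_Tnf pcong_nf0 by blast
  then have "?P (SOME nf. ?P nf)" by (rule someI)
  then have "(SOME nf. ?P nf) = NF (hP (t, e))" using NF_unique by blast
  then have "(SOME nf. ?P nf) = nf0 t e" using NF_hP by simp
  then show ?thesis unfolding pstar_def by (simp add: nf0_def Let_def)
qed

lemma wplus_hP: "wplus act (hP (t, e)) = act t e"
  by (simp add: wplus_def hP_def)

lemma pcong_hP1: "pcong act (hP (1, e)) [Inr e]"
proof -
  have "pcong act ([Inl 1] @ [Inr e]) ([Inr top] @ [Inr e])" by (intro pcong.right pcong.one)
  then have 1: "pcong act [Inl 1, Inr e] [Inr top, Inr e]" by simp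
  have "pcong act [Inr top, Inr e] [Inr (inf top e)]" by (rule pcong.fpX)
  then have 2: "pcong act [Inr top, Inr e] [Inr e]" by simp
  show ?thesis using pcong.trans[OF 1 2] by (simp add: hP_def)
qed

fun chainR :: "('a \<Rightarrow> 'a \<Rightarrow> bool) \<Rightarrow> 'a list \<Rightarrow> bool" where
  "chainR R (a # b # xs) = (R a b \<and> chainR R (b # xs))"
| "chainR R _ = True"

lemma chainR_nth: "(\<forall>i. i + 1 < length xs \<longrightarrow> R (xs ! i) (xs ! (i + 1))) \<Longrightarrow> chainR R xs"
proof (induction xs)
  case (Cons a xs)
  show ?case
  proof (cases xs)
    case (Cons b ys)
    have "R a b" using Cons.prems[rule_format, of 0] Cons by simp
    moreover have "chainR R xs"
    proof (rule Cons.IH, intro allI impI)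
      fix i assume "i + 1 < length xs"
      then show "R (xs ! i) (xs ! (i + 1))" using Cons.prems[rule_format, of "Suc i"] by simp
    qed
    ultimately show ?thesis using Cons by simp
  qed simp
qed simp

fun Cn :: "('t \<times> 'x) list \<Rightarrow> 't \<times> ('x \<times> 't) list" where
  "Cn [] = (1, [])"
| "Cn [(t,e)] = nf0 t e"
| "Cn ((t,e) # h # hs) = (t, (e, fst (Cn (h # hs))) # snd (Cn (h # hs)))"

definition crel :: "'t \<times> 'x \<Rightarrow> 't \<times> 'x \<Rightarrow> bool" where
  "crel a b \<longleftrightarrow> snd a < act (fst b) (snd b) \<and> fst b \<noteq> 1"

lemma Cn_NF:
  "hs \<noteq> [] \<Longrightarrow> chainR crel hs \<Longrightarrow>
   NF (concat (map hP hs)) = Cn hs \<and> goodl (snd (Cn hs)) \<and>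
   Pn (Cn hs) = act (fst (hd hs)) (snd (hd hs)) \<and> fst (Cn hs) = fst (hd hs)"
proof (induction hs rule: Cn.induct)
  case (2 t e)
  have "goodl (snd (nf0 t e))" using nf0_Tnf[of t e] Tnf_goodl[of t] by (simp add: nf0_def)
  then show ?case using NF_hP[of t e]
    by (auto simp: nf0_def)
next
  case (3 t e h hs)
  obtain t' xs' where c: "Cn (h # hs) = (t', xs')" by (cases "Cn (h # hs)")
  have ih: "NF (concat (map hP (h # hs))) = (t', xs')" "goodl xs'"
     "Pn (t', xs') = act (fst h) (snd h)" "t' = fst h"
    using 3 c by auto
  have lt: "e < Pn (t', xs')" "t' \<noteq> 1" using 3(4) ih by (simp_all add: crel_def)
  have ne: "inf e (Pn (t', xs')) \<noteq> Pn (t', xs')" using lt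
    by (metis inf.absorb_iff2 less_le_not_le)
  have ie: "inf e (Pn (t', xs')) = e" using lt by (simp add: inf.absorb1 less_imp_le)
  have "NF (concat (map hP ((t,e) # h # hs))) = La (Inl t) (La (Inr e) (t', xs'))"
    using ih(1) by (simp add: NF_def hP_def Lw_append)
  also have "\<dots> = (t, (e, t') # xs')" using ne ie lt by (simp add: Let_def del: Pn_Cons)
  moreover have "e \<noteq> top" using lt(1) by (metis less_le_not_le top_greatest)
  ultimately show ?case using c ih lt
    by (auto simp: inf.absorb1 less_imp_le)
qed simp

end

locale actY = actl act for act :: "'t::monoid_mult \<Rightarrow> 'x::bounded_semilattice_inf_top \<Rightarrow> 'x" +
  fixes Y :: "'x set"
  assumes gY: "good_Y act Y"
begin

lemma Y_inf: "e \<in> Y \<Longrightarrow> f \<in> Y \<Longrightarrow> inf e f \<in> Y" using gY by (simp add: good_Y_def)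
lemma Y_A: "e \<in> Y \<Longrightarrow> f \<in> Y \<Longrightarrow> e \<le> f \<Longrightarrow> act t f \<in> Y \<Longrightarrow> act t e \<in> Y"
  using gY by (simp add: good_Y_def)

fun QN :: "'t \<Rightarrow> ('x \<times> 't) list \<Rightarrow> bool" where
  "QN t0 [] = (top \<in> Y \<and> act t0 top \<in> Y)"
| "QN t0 ((e,u)#xs) = (e \<in> Y \<and> act t0 e \<in> Y \<and> ((xs = [] \<and> u = 1) \<or> QN u xs))"

lemma QN_P: "goodl xs \<Longrightarrow> QN t0 xs \<Longrightarrow> Pn (t0, xs) \<in> Y"
  by (cases xs) (auto simp: Pn_good_Cons simp del: Pn_Cons)

lemma QN_step:
  assumes g: "goodl xs" and q: "QN t0 xs" and eY: "e \<in> Y" and teY: "act t e \<in> Y"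
  shows "QN (fst (La (Inl t) (La (Inr e) (t0, xs)))) (snd (La (Inl t) (La (Inr e) (t0, xs))))"
proof -
  define p where "p = Pn (t0, xs)"
  have pY: "p \<in> Y" using QN_P[OF g q] p_def by simp
  show ?thesis
  proof (cases "inf e p = p")
    case True
    then have pe: "p \<le> e" by (metis inf.absorb_iff2)
    have tp: "act t p \<in> Y" using Y_A[OF pY eY pe teY] .
    have La: "La (Inr e) (t0, xs) = (t0, xs)" using True by (simp add: p_def Let_def del: Pn_Cons)
    show ?thesis
    proof (cases xs)
      case Nil then show ?thesis using La q tp by (simp add: act_mult p_def)
    next
      case (Cons a r)
      obtain e1 u1 where a: "a = (e1, u1)" by (cases a)
      have "p = act t0 e1" using g Pn_good_Cons[of e1 u1 r t0] by (simp add: p_def Cons a)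
      then show ?thesis using La q tp Cons a by (simp add: act_mult)
    qed
  next
    case ne: False
    show ?thesis
    proof (cases "t0 = 1 \<and> xs \<noteq> []")
      case True
      then obtain e1 u1 r where xs: "xs = (e1,u1)#r" and t0: "t0 = 1"
        by (metis list.exhaust surj_pair)
      have pe: "Pn (1, (e1,u1)#r) = e1" using g Pn_good_Cons[of e1 u1 r 1] by (simp add: xs)
      have La: "La (Inr e) (t0, xs) = (1, (inf e e1, u1) # r)"
        using ne pe by (simp add: p_def xs t0 Let_def del: Pn_Cons)
      have "inf e e1 \<in> Y" using q xs eY Y_inf by simp
      moreover have "act t (inf e e1) \<in> Y" using Y_A[OF _ eY _ teY] calculation by simp
      ultimately show ?thesis using La q xs t0 by simp
    next
      case False
      have La: "La (Inr e) (t0, xs) = (1, (inf e p, t0) # xs)"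
        using ne False by (auto simp: p_def Let_def simp del: Pn_Cons)
      have "inf e p \<in> Y" using pY eY Y_inf by simp
      moreover have "act t (inf e p) \<in> Y" using Y_A[OF _ eY _ teY] calculation by simp
      ultimately show ?thesis using La q by simp
    qed
  qed
qed

lemma QN_NF:
  "ps \<noteq> [] \<Longrightarrow> (\<forall>(t,e)\<in>set ps. e \<in> Y \<and> act t e \<in> Y) \<Longrightarrow>
   QN (fst (NF (concat (map hP ps)))) (snd (NF (concat (map hP ps))))"
proof (induction ps)
  case (Cons a ps)
  obtain t e where a: "a = (t,e)" by (cases a)
  show ?case
  proof (cases "ps = []")
    case True
    then show ?thesis using Cons.prems a NF_hP[of t e] by (auto simp: nf0_def)
  next
    case False
    obtain t0 xs where n: "NF (concat (map hP ps)) = (t0, xs)" by (cases "NF (concat (map hP ps))")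
    have q: "QN t0 xs" using Cons False n by simp
    have g: "goodl xs" using NF_good[of "concat (map hP ps)"] n by simp
    have "NF (concat (map hP (a # ps))) = La (Inl t) (La (Inr e) (t0, xs))"
      using n by (simp add: a NF_def hP_def Lw_append)
    then show ?thesis using QN_step[OF g q, of e t] Cons.prems a by simp
  qed
qed simp

lemma QN_Cn:
  "hs \<noteq> [] \<Longrightarrow> chainR crel hs \<Longrightarrow> QN (fst (Cn hs)) (snd (Cn hs)) \<Longrightarrow>
   \<forall>(t,e)\<in>set hs. e \<in> Y \<and> act t e \<in> Y"
proof (induction hs rule: Cn.induct)
  case (2 t e) then show ?case by (cases "e = top") (auto simp: nf0_def)
next
  case (3 t e h hs)
  have ch: "chainR crel (h # hs)" "crel (t,e) h" using 3(2) 3(3) 3(4) by auto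
  have "fst (Cn (h # hs)) = fst h" using Cn_NF[of "h # hs"] ch by simp
  moreover have "fst h \<noteq> 1" using ch by (simp add: crel_def)
  ultimately show ?case using 3 by auto
qed simp


lemma inQ_hP: "inQ act Y (hP (t, e)) \<Longrightarrow> e \<in> Y \<and> act t e \<in> Y"
proof -
  assume "inQ act Y (hP (t, e))"
  then obtain ps where ps: "ps \<noteq> []" "\<forall>(t,e)\<in>set ps. e \<in> Y \<and> act t e \<in> Y"
    "pcong act (hP (t, e)) (concat (map hP ps))" unfolding inQ_def by blast
  have "NF (hP (t, e)) = NF (concat (map hP ps))" using pcong_NF ps(3) by blast
  then have "QN (fst (nf0 t e)) (snd (nf0 t e))" using QN_NF[OF ps(1,2)] NF_hP by simp
  then show ?thesis by (cases "e = top") (auto simp: nf0_def)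
qed

lemma part1:
  assumes q: "inQ act Y w" and c: "is_HPcanon act w hs"
  shows "\<forall>h\<in>set hs. inHQ act Y (hP h)"
proof -
  obtain ps where ps: "ps \<noteq> []" "\<forall>(t,e)\<in>set ps. e \<in> Y \<and> act t e \<in> Y"
    "pcong act w (concat (map hP ps))" using q unfolding inQ_def by blast
  have hs: "hs \<noteq> []" "pcong act (concat (map hP hs)) w"
    and c1: "\<forall>i. i + 1 < length hs \<longrightarrow> pstar act (hP (hs ! i)) < wplus act (hP (hs ! (i + 1)))"
    and c2: "\<forall>i. 1 \<le> i \<and> i < length hs \<longrightarrow> \<not> (\<exists>f. pcong act (hP (hs ! i)) [Inr f])"
    using c unfolding is_HPcanon_def by blast+
  have ch: "chainR crel hs"
  proof (rule chainR_nth, intro allI impI)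
    fix i assume i: "i + 1 < length hs"
    obtain t e where a: "hs ! i = (t, e)" by (cases "hs ! i")
    obtain t' e' where b: "hs ! (i+1) = (t', e')" by (cases "hs ! (i+1)")
    have "e < act t' e'" using c1[rule_format, OF i] a b pstar_hP wplus_hP by simp
    moreover have "t' \<noteq> 1"
    proof
      assume "t' = 1"
      then have "pcong act (hP (hs ! (i+1))) [Inr e']" using b pcong_hP1 by simp
      then show False using c2[rule_format, of "i+1"] i by auto
    qed
    ultimately show "crel (hs ! i) (hs ! (i + 1))" using a b by (simp add: crel_def)
  qed
  have "NF (concat (map hP hs)) = NF (concat (map hP ps))"
    using pcong_NF pcong.trans[OF hs(2) ps(3)] by blast
  then have "QN (fst (Cn hs)) (snd (Cn hs))" using QN_NF[OF ps(1,2)] Cn_NF[OF hs(1) ch] by simp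
  then have "\<forall>(t,e)\<in>set hs. e \<in> Y \<and> act t e \<in> Y" using QN_Cn[OF hs(1) ch] by blast
  then show ?thesis unfolding inHQ_def using pcong.refl by fastforce
qed

lemma part2: "inQ act Y (hP (t, e)) \<longleftrightarrow> inHQ act Y (hP (t, e))"
proof
  assume "inQ act Y (hP (t, e))"
  then show "inHQ act Y (hP (t, e))" using inQ_hP unfolding inHQ_def using pcong.refl by blast
next
  assume "inHQ act Y (hP (t, e))"
  then obtain t' e' where "e' \<in> Y" "act t' e' \<in> Y" "pcong act (hP (t, e)) (hP (t', e'))"
    unfolding inHQ_def by blast
  then show "inQ act Y (hP (t, e))" unfolding inQ_def
    by (intro exI[of _ "[(t', e')]"]) simp
qed

lemma part3: "inQ act Y [Inr f] \<longleftrightarrow> (\<exists>g\<in>Y. pcong act [Inr f] [Inr g])"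
proof
  assume "inQ act Y [Inr f]"
  then obtain ps where ps: "ps \<noteq> []" "\<forall>(t,e)\<in>set ps. e \<in> Y \<and> act t e \<in> Y"
    "pcong act [Inr f] (concat (map hP ps))" unfolding inQ_def by blast
  have "pcong act (hP (1, f)) (concat (map hP ps))" by (rule pcong.trans[OF pcong_hP1 ps(3)])
  then have "inQ act Y (hP (1, f))" using ps unfolding inQ_def by blast
  then have "f \<in> Y" using inQ_hP by blast
  then show "\<exists>g\<in>Y. pcong act [Inr f] [Inr g]" using pcong.refl by blast
next
  assume "\<exists>g\<in>Y. pcong act [Inr f] [Inr g]"
  then obtain g where g: "g \<in> Y" "pcong act [Inr f] [Inr g]" by blast
  have "pcong act [Inr f] (hP (1, g))" by (rule pcong.trans[OF g(2) pcong.sym[OF pcong_hP1]])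
  then show "inQ act Y [Inr f]" unfolding inQ_def using g(1)
    by (intro exI[of _ "[(1, g)]"]) simp
qed

end

theorem mainTheorem15:
  fixes act :: "'t::monoid_mult \<Rightarrow> 'x::bounded_semilattice_inf_top \<Rightarrow> 'x"
    and Y :: "'x set"
  assumes "is_action act"
    and "good_Y act Y"
  shows "(\<forall>w hs. inQ act Y w \<longrightarrow> is_HPcanon act w hs \<longrightarrow> (\<forall>h\<in>set hs. inHQ act Y (hP h)))
       \<and> (\<forall>t e. inQ act Y (hP (t, e)) \<longleftrightarrow> inHQ act Y (hP (t, e)))
       \<and> (\<forall>f. inQ act Y [Inr f] \<longleftrightarrow> (\<exists>g\<in>Y. pcong act [Inr f] [Inr g]))"
proof -
  interpret actY act Y using assms by (simp add: actY_def actl_def actY_axioms_def)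
  show ?thesis using part1 part2 part3 by blast
qed

end
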